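(* Let $K$ be a field and $X$ a finite connected poset. Let $\theta:B\to B$ be an admissible bijection which is monotone on maximal chains in $X$, and let $\sigma:X^2_<\to K^*$ be compatible with $\theta$. Then there exists an elementary Lie automorphism $\varphi$ of $I(X,K)$ such that $\varphi(e_{xy})=\sigma(x,y)\theta(e_{xy})$ for all $x<y$.
   Context: A walk is a sequence $u_0,\dots,u_m$ in $X$ such that for each $i$ one of $u_i,u_{i+1}$ covers the other; closed if $u_0=u_m$; $X$ is connected if any two elements are joined by a walk. $I(X,K)$ is the incidence algebra: functions $f:X\times X\to K$ with $f(x,y)=0$ unless $x\le y$, product $(fg)(x,y)=\sum_{x\le t\le y}f(x,t)g(t,y)$; $e_{xy}$ ($x\le y$) is the basis element equal to $1$ at $(x,y)$ and $0$ elsewhere. $B=\{e_{xy}:x<y\}$, $X^2_<=\{(x,y):x<y\}$. A Lie automorphism is a bijective linear map preserving $[f,g]=fg-gf$. With $l(\lfloor x,y\rfloor)$ the maximal length of a chain in $\{z:x\le z\le y\}$ and $L_i=\mathrm{span}_K\{e_{xy}:l(\lfloor x,y\rfloor)=i\}$, for a Lie automorphism $\psi$ let $\widetilde\psi$ send $e_{xy}\in L_i$ to the $L_i$-component of $\psi(e_{xy})$; a Lie automorphism is elementary if it equals $\widetilde\psi$ for some Lie automorphism $\psi$ (equivalently, it maps each $L_i$ into $L_i$). $\theta$ is monotone on maximal chains if for every maximal chain $u_1<\dots<u_m$ of $X$ there is a maximal chain $v_1<\dots<v_m$ with either $\theta(e_{u_iu_j})=e_{v_iv_j}$ for all $i<j$,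 or $\theta(e_{u_iu_j})=e_{v_{m-j+1}v_{m-i+1}}$ for all $i<j$. For a closed walk $\Gamma:u_0,\dots,u_m=u_0$ and $z\in X$: $s^+(z)$ = number of $i$ with $u_i<u_{i+1}$ and $\theta(e_{zw})=e_{u_iu_{i+1}}$ for some $w>z$; $s^-(z)$ = number of $i$ with $u_i>u_{i+1}$ and $\theta(e_{zw})=e_{u_{i+1}u_i}$ for some $w>z$; $t^+(z)$ = number of $i$ with $u_i<u_{i+1}$ and $\theta(e_{wz})=e_{u_iu_{i+1}}$ for some $w<z$; $t^-(z)$ = number of $i$ with $u_i>u_{i+1}$ and $\theta(e_{wz})=e_{u_{i+1}u_i}$ for some $w<z$. $\theta$ is admissible if $s^+(z)-s^-(z)=t^+(z)-t^-(z)$ for all closed walks and all $z$. $\sigma$ is compatible with $\theta$ if for all $x<y<z$: $\sigma(x,z)=\sigma(x,y)\sigma(y,z)$ whenever $\theta(e_{xz})=\theta(e_{xy})\theta(e_{yz})$, and $\sigma(x,z)=-\sigma(x,y)\sigma(y,z)$ whenever $\theta(e_{xz})=\theta(e_{yz})\theta(e_{xy})$. *)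

theory Defs
  imports Main
begin

definition covers :: "'a::order \<Rightarrow> 'a \<Rightarrow> bool" where
  "covers y x \<longleftrightarrow> x < y \<and> \<not> (\<exists>z. x < z \<and> z < y)"

definition is_walk :: "'a::order list \<Rightarrow> bool" where
  "is_walk us \<longleftrightarrow> us \<noteq> [] \<and>
     (\<forall>i. Suc i < length us \<longrightarrow> covers (us ! i) (us ! Suc i) \<or> covers (us ! Suc i) (us ! i))"

definition is_closed_walk :: "'a::order list \<Rightarrow> bool" where
  "is_closed_walk us \<longleftrightarrow> is_walk us \<and> hd us = last us"

definition poset_connected :: "'a::order itself \<Rightarrow> bool" where
  "poset_connected _ \<longleftrightarrow> (\<forall>x y::'a. \<exists>us. is_walk us \<and> hd us = x \<and> last us = y)"

definition is_chain :: "'a::order set \<Rightarrow> bool" where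
  "is_chain C \<longleftrightarrow> (\<forall>x\<in>C. \<forall>y\<in>C. x \<le> y \<or> y \<le> x)"

definition is_max_chain :: "'a::order list \<Rightarrow> bool" where
  "is_max_chain us \<longleftrightarrow> sorted_wrt (<) us \<and>
     (\<forall>C. is_chain C \<and> set us \<subseteq> C \<longrightarrow> C = set us)"

definition chain_len :: "'a::{order,finite} \<Rightarrow> 'a \<Rightarrow> nat" where
  "chain_len x y = Max ((\<lambda>C. card C - 1) ` {C. C \<subseteq> {z. x \<le> z \<and> z \<le> y} \<and> is_chain C})"

definition inc_alg :: "('a::order \<Rightarrow> 'a \<Rightarrow> 'k::field) set" where
  "inc_alg = {f. \<forall>x y. \<not> x \<le> y \<longrightarrow> f x y = 0}"

definition inc_mult :: "('a::{order,finite} \<Rightarrow> 'a \<Rightarrow> 'k::field) \<Rightarrow> ('a \<Rightarrow> 'a \<Rightarrow> 'k) \<Rightarrow> 'a \<Rightarrow> 'a \<Rightarrow> 'k" where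
  "inc_mult f g x y = (\<Sum>t\<in>{t. x \<le> t \<and> t \<le> y}. f x t * g t y)"

definition inc_e :: "'a::order \<Rightarrow> 'a \<Rightarrow> 'a \<Rightarrow> 'a \<Rightarrow> 'k::field" where
  "inc_e x y = (\<lambda>a b. if a = x \<and> b = y then 1 else 0)"

definition inc_add :: "('a \<Rightarrow> 'a \<Rightarrow> 'k::field) \<Rightarrow> ('a \<Rightarrow> 'a \<Rightarrow> 'k) \<Rightarrow> 'a \<Rightarrow> 'a \<Rightarrow> 'k" where
  "inc_add f g = (\<lambda>a b. f a b + g a b)"

definition inc_smult :: "'k::field \<Rightarrow> ('a \<Rightarrow> 'a \<Rightarrow> 'k) \<Rightarrow> 'a \<Rightarrow> 'a \<Rightarrow> 'k" where
  "inc_smult c f = (\<lambda>a b. c * f a b)"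

definition lie_bracket :: "('a::{order,finite} \<Rightarrow> 'a \<Rightarrow> 'k::field) \<Rightarrow> ('a \<Rightarrow> 'a \<Rightarrow> 'k) \<Rightarrow> 'a \<Rightarrow> 'a \<Rightarrow> 'k" where
  "lie_bracket f g = (\<lambda>a b. inc_mult f g a b - inc_mult g f a b)"

definition lie_automorphism :: "(('a::{order,finite} \<Rightarrow> 'a \<Rightarrow> 'k::field) \<Rightarrow> ('a \<Rightarrow> 'a \<Rightarrow> 'k)) \<Rightarrow> bool" where
  "lie_automorphism \<phi> \<longleftrightarrow> bij_betw \<phi> inc_alg inc_alg \<and>
     (\<forall>f\<in>inc_alg. \<forall>g\<in>inc_alg. \<phi> (inc_add f g) = inc_add (\<phi> f) (\<phi> g)) \<and>
     (\<forall>c. \<forall>f\<in>inc_alg. \<phi> (inc_smult c f) = inc_smult c (\<phi> f)) \<and>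
     (\<forall>f\<in>inc_alg. \<forall>g\<in>inc_alg. \<phi> (lie_bracket f g) = lie_bracket (\<phi> f) (\<phi> g))"

text \<open>L_i = span {e_xy : l(\<lfloor>x,y\<rfloor>) = i}, i.e. the elements of I(X,K) supported on such pairs.\<close>
definition L_space :: "nat \<Rightarrow> ('a::{order,finite} \<Rightarrow> 'a \<Rightarrow> 'k::field) set" where
  "L_space i = {f. \<forall>a b. f a b \<noteq> 0 \<longrightarrow> a \<le> b \<and> chain_len a b = i}"

definition elementary :: "(('a::{order,finite} \<Rightarrow> 'a \<Rightarrow> 'k::field) \<Rightarrow> ('a \<Rightarrow> 'a \<Rightarrow> 'k)) \<Rightarrow> bool" where
  "elementary \<phi> \<longleftrightarrow> lie_automorphism \<phi> \<and> (\<forall>i. \<forall>f\<in>L_space i. \<phi> f \<in> L_space i)"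

section \<open>Conditions on \<theta> : B \<rightarrow> B (given by a map on X^2_<, \<theta>(e_xy) = e_{\<theta>(x,y)}) and \<sigma>\<close>

definition strict_pairs :: "('a::order \<times> 'a) set" where
  "strict_pairs = {(x, y). x < y}"

definition monotone_on_max_chains :: "('a::order \<times> 'a \<Rightarrow> 'a \<times> 'a) \<Rightarrow> bool" where
  "monotone_on_max_chains \<theta> \<longleftrightarrow>
     (\<forall>us. is_max_chain us \<longrightarrow>
        (\<exists>vs. is_max_chain vs \<and> length vs = length us \<and>
           ((\<forall>i j. i < j \<and> j < length us \<longrightarrow> \<theta> (us ! i, us ! j) = (vs ! i, vs ! j)) \<or>
            (\<forall>i j. i < j \<and> j < length us \<longrightarrow>
               \<theta> (us ! i, us ! j) = (vs ! (length us - 1 - j), vs ! (length us - 1 - i))))))"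

definition s_plus :: "('a::order \<times> 'a \<Rightarrow> 'a \<times> 'a) \<Rightarrow> 'a list \<Rightarrow> 'a \<Rightarrow> nat" where
  "s_plus \<theta> us z = card {i. Suc i < length us \<and> us ! i < us ! Suc i \<and>
      (\<exists>w. z < w \<and> \<theta> (z, w) = (us ! i, us ! Suc i))}"

definition s_minus :: "('a::order \<times> 'a \<Rightarrow> 'a \<times> 'a) \<Rightarrow> 'a list \<Rightarrow> 'a \<Rightarrow> nat" where
  "s_minus \<theta> us z = card {i. Suc i < length us \<and> us ! i > us ! Suc i \<and>
      (\<exists>w. z < w \<and> \<theta> (z, w) = (us ! Suc i, us ! i))}"

definition t_plus :: "('a::order \<times> 'a \<Rightarrow> 'a \<times> 'a) \<Rightarrow> 'a list \<Rightarrow> 'a \<Rightarrow> nat" where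
  "t_plus \<theta> us z = card {i. Suc i < length us \<and> us ! i < us ! Suc i \<and>
      (\<exists>w. w < z \<and> \<theta> (w, z) = (us ! i, us ! Suc i))}"

definition t_minus :: "('a::order \<times> 'a \<Rightarrow> 'a \<times> 'a) \<Rightarrow> 'a list \<Rightarrow> 'a \<Rightarrow> nat" where
  "t_minus \<theta> us z = card {i. Suc i < length us \<and> us ! i > us ! Suc i \<and>
      (\<exists>w. w < z \<and> \<theta> (w, z) = (us ! Suc i, us ! i))}"

definition admissible :: "('a::order \<times> 'a \<Rightarrow> 'a \<times> 'a) \<Rightarrow> bool" where
  "admissible \<theta> \<longleftrightarrow> (\<forall>us z. is_closed_walk us \<longrightarrow>
     int (s_plus \<theta> us z) - int (s_minus \<theta> us z) = int (t_plus \<theta> us z) - int (t_minus \<theta> us z))"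

definition compatible :: "('a::{order,finite} \<Rightarrow> 'a \<Rightarrow> 'k::field) \<Rightarrow> ('a \<times> 'a \<Rightarrow> 'a \<times> 'a) \<Rightarrow> bool" where
  "compatible \<sigma> \<theta> \<longleftrightarrow> (\<forall>x y z. x < y \<and> y < z \<longrightarrow>
     ((inc_e (fst (\<theta> (x, z))) (snd (\<theta> (x, z))) :: 'a \<Rightarrow> 'a \<Rightarrow> 'k) =
        inc_mult (inc_e (fst (\<theta> (x, y))) (snd (\<theta> (x, y)))) (inc_e (fst (\<theta> (y, z))) (snd (\<theta> (y, z))))
        \<longrightarrow> \<sigma> x z = \<sigma> x y * \<sigma> y z) \<and>
     ((inc_e (fst (\<theta> (x, z))) (snd (\<theta> (x, z))) :: 'a \<Rightarrow> 'a \<Rightarrow> 'k) =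
        inc_mult (inc_e (fst (\<theta> (y, z))) (snd (\<theta> (y, z)))) (inc_e (fst (\<theta> (x, y))) (snd (\<theta> (x, y))))
        \<longrightarrow> \<sigma> x z = - (\<sigma> x y * \<sigma> y z)))"

end

theory Submission
  imports Defs "HOL-Analysis.Cartesian_Space"
begin

lemma chain_sorted_list:
  fixes C :: "'a::order set"
  assumes "finite C" "is_chain C"
  shows "\<exists>us. sorted_wrt (<) us \<and> set us = C"
  using assms
proof (induction "card C" arbitrary: C rule: less_induct)
  case less
  show ?case
  proof (cases "C = {}")
    case True then show ?thesis by (intro exI[of _ "[]"]) auto
  next
    case False
    obtain m where m: "m \<in> C" "\<forall>b\<in>C. b \<le> m \<longrightarrow> m = b"
      using finite_has_minimal[OF less.prems(1) False] by blast
    have mle: "\<forall>c\<in>C. m \<le> c"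
      using m less.prems(2) unfolding is_chain_def by metis
    have "card (C - {m}) < card C"
      using m(1) less.prems(1) by (meson card_Diff1_less)
    moreover have "is_chain (C - {m})" using less.prems(2) unfolding is_chain_def by blast
    ultimately obtain us where us: "sorted_wrt (<) us" "set us = C - {m}"
      using less.hyps less.prems(1) by (metis finite_Diff)
    show ?thesis
      apply (rule exI[of _ "m # us"])
      using us mle m(1) by (auto simp: order_le_less)
  qed
qed

lemma max_chain_exists:
  fixes S :: "'a::{order,finite} set"
  assumes "is_chain S"
  shows "\<exists>us. is_max_chain us \<and> S \<subseteq> set us"
proof -
  let ?Q = "{C. is_chain C \<and> S \<subseteq> C}"
  have fin: "finite ?Q" by simp
  have ne: "card ` ?Q \<noteq> {}" using assms by auto
  have "Max (card ` ?Q) \<in> card ` ?Q" using fin ne by (intro Max_in) auto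
  then obtain C where C: "is_chain C" "S \<subseteq> C" "card C = Max (card ` ?Q)" by auto
  have big: "\<And>C'. is_chain C' \<Longrightarrow> S \<subseteq> C' \<Longrightarrow> card C' \<le> card C"
    using C(3) fin by (metis (mono_tags, lifting) Max_ge finite_imageI image_eqI mem_Collect_eq)
  obtain us where us: "sorted_wrt (<) us" "set us = C"
    using chain_sorted_list[of C] C(1) by auto
  have "is_max_chain us"
    unfolding is_max_chain_def
  proof (intro conjI allI impI)
    show "sorted_wrt (<) us" by fact
    fix C' assume "is_chain C' \<and> set us \<subseteq> C'"
    then show "C' = set us"
      using big[of C'] C(2) us(2) by (metis card_seteq finite subset_trans)
  qed
  then show ?thesis using C(2) us(2) by auto
qed

lemma sorted_less_unique:
  fixes xs ys :: "'a::order list"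
  assumes "sorted_wrt (<) xs" "sorted_wrt (<) ys" "set xs = set ys"
  shows "xs = ys"
  using assms
proof (induction xs arbitrary: ys)
  case Nil then show ?case by simp
next
  case (Cons x xs)
  then obtain y ys' where ys: "ys = y # ys'" by (cases ys) auto
  have "x = y"
  proof (rule ccontr)
    assume ne: "x \<noteq> y"
    have "y \<in> set xs" using Cons.prems ys ne by (metis set_ConsD list.set_intros(1))
    then have "x < y" using Cons.prems(1) by simp
    have "x \<in> set ys'" using Cons.prems ys ne by (metis set_ConsD list.set_intros(1))
    then have "y < x" using Cons.prems(2) ys by simp
    with \<open>x < y\<close> show False by simp
  qed
  moreover have "set xs = set ys'"
  proof -
    have "x \<notin> set xs" using Cons.prems(1) by auto
    moreover have "y \<notin> set ys'" using Cons.prems(2) ys by auto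
    ultimately show ?thesis using Cons.prems(3) ys \<open>x = y\<close>
      by (metis Diff_insert_absorb list.simps(15))
  qed
  ultimately show ?case using Cons ys by simp
qed

lemma max_chain_less:
  assumes "is_max_chain us" "i < j" "j < length us"
  shows "us ! i < us ! j"
  using assms sorted_wrt_nth_less unfolding is_max_chain_def by blast

lemma max_chain_less_iff:
  assumes "is_max_chain us" "i < length us" "j < length us"
  shows "us ! i < us ! j \<longleftrightarrow> i < j"
  using assms max_chain_less[OF assms(1)]
  by (metis less_asym' linorder_neqE_nat order_less_irrefl)

lemma max_chain_le_iff:
  assumes "is_max_chain us" "i < length us" "j < length us"
  shows "us ! i \<le> us ! j \<longleftrightarrow> i \<le> j"
proof (cases "i = j")
  case False
  then have "us ! i < us ! j \<or> us ! j < us ! i"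
    using max_chain_less_iff[OF assms(1)] assms by (meson linorder_neqE_nat)
  then have "us ! i \<noteq> us ! j" by auto
  then show ?thesis using max_chain_less_iff[OF assms] False by (auto simp: order_le_less)
qed simp

lemma max_chain_chain:
  assumes "is_max_chain us"
  shows "is_chain (set us)"
  unfolding is_chain_def
proof (intro ballI)
  fix x y assume "x \<in> set us" "y \<in> set us"
  then obtain i j where "i < length us" "j < length us" "x = us ! i" "y = us ! j"
    by (metis in_set_conv_nth)
  then show "x \<le> y \<or> y \<le> x" using max_chain_le_iff[OF assms] by (metis nat_le_linear)
qed


definition Rel :: "('a::order \<times> 'a \<Rightarrow> 'a \<times> 'a) \<Rightarrow> 'a list \<Rightarrow> 'a list \<Rightarrow> bool" where
  "Rel \<theta> us vs \<longleftrightarrow> is_max_chain vs \<and> length vs = length us \<and>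
           ((\<forall>i j. i < j \<and> j < length us \<longrightarrow> \<theta> (us ! i, us ! j) = (vs ! i, vs ! j)) \<or>
            (\<forall>i j. i < j \<and> j < length us \<longrightarrow>
               \<theta> (us ! i, us ! j) = (vs ! (length us - 1 - j), vs ! (length us - 1 - i))))"

definition PP :: "'a list \<Rightarrow> ('a \<times> 'a) set" where
  "PP us = {(us ! i, us ! j) | i j. i < j \<and> j < length us}"

lemma PP_strict: "is_max_chain us \<Longrightarrow> PP us \<subseteq> strict_pairs"
  unfolding PP_def strict_pairs_def using max_chain_less by fastforce

lemma PP_set:
  assumes "length us \<ge> 2"
  shows "set us = fst ` PP us \<union> snd ` PP us"
proof
  show "set us \<subseteq> fst ` PP us \<union> snd ` PP us"
  proof
    fix x assume "x \<in> set us"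
    then obtain k where k: "k < length us" "x = us ! k" by (metis in_set_conv_nth)
    show "x \<in> fst ` PP us \<union> snd ` PP us"
    proof (cases "k = 0")
      case True
      then have "(us ! k, us ! 1) \<in> PP us" unfolding PP_def using assms by force
      then show ?thesis using k by (metis UnI1 fst_conv image_eqI)
    next
      case False
      then have "(us ! 0, us ! k) \<in> PP us" unfolding PP_def using k by force
      then show ?thesis using k by (metis UnI2 snd_conv image_eqI)
    qed
  qed
  show "fst ` PP us \<union> snd ` PP us \<subseteq> set us"
    unfolding PP_def by auto
qed

lemma rel_pair:
  assumes "Rel \<theta> us vs" "i < j" "j < length us"
  shows "\<exists>i' j'. i' < j' \<and> j' < length us \<and> j' - i' = j - i \<and> \<theta> (us ! i, us ! j) = (vs ! i', vs ! j')"
  using assms unfolding Rel_def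
  apply (elim conjE disjE)
   apply (rule exI[of _ i], rule exI[of _ j]; simp)
  apply (rule exI[of _ "length us - 1 - j"], rule exI[of _ "length us - 1 - i"])
  apply auto
  done

lemma rel_pair_back:
  assumes "Rel \<theta> us vs" "i < j" "j < length vs"
  shows "\<exists>i' j'. i' < j' \<and> j' < length us \<and> j' - i' = j - i \<and> \<theta> (us ! i', us ! j') = (vs ! i, vs ! j)"
  using assms unfolding Rel_def
  apply (elim conjE disjE)
   apply (rule exI[of _ i], rule exI[of _ j]; simp)
  apply (rule exI[of _ "length us - 1 - j"], rule exI[of _ "length us - 1 - i"])
  apply (drule spec[of _ "length us - 1 - j"], drule spec[of _ "length us - 1 - i"])
  apply auto
  done

lemma rel_image:
  assumes "Rel \<theta> us vs"
  shows "\<theta> ` PP us = PP vs"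
proof
  show "\<theta> ` PP us \<subseteq> PP vs"
  proof
    fix p assume "p \<in> \<theta> ` PP us"
    then obtain i j where "i < j" "j < length us" "p = \<theta> (us ! i, us ! j)" unfolding PP_def by auto
    then show "p \<in> PP vs" using rel_pair[OF assms] assms unfolding PP_def Rel_def by fastforce
  qed
  show "PP vs \<subseteq> \<theta> ` PP us"
  proof
    fix p assume "p \<in> PP vs"
    then obtain i j where "i < j" "j < length vs" "p = (vs ! i, vs ! j)" unfolding PP_def by auto
    then obtain i' j' where "i' < j'" "j' < length us" "\<theta> (us ! i', us ! j') = p"
      using rel_pair_back[OF assms] by metis
    then show "p \<in> \<theta> ` PP us" unfolding PP_def by blast
  qed
qed

lemma finite_max_chains: "finite {us::'a::{order,finite} list. is_max_chain us \<and> length us = n}"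
proof -
  have "finite {xs::'a list. set xs \<subseteq> UNIV \<and> length xs = n}"
    by (rule finite_lists_length_eq) simp
  then show ?thesis by (rule finite_subset[rotated]) auto
qed

locale thsetup =
  fixes \<theta> :: "'a::{order,finite} \<times> 'a \<Rightarrow> 'a \<times> 'a"
  assumes bij: "bij_betw \<theta> strict_pairs strict_pairs"
    and mono: "monotone_on_max_chains \<theta>"
begin

lemma inj: "inj_on \<theta> strict_pairs" using bij bij_betw_def by blast

lemma strict_img: "x < y \<Longrightarrow> fst (\<theta> (x, y)) < snd (\<theta> (x, y))"
proof -
  assume "x < y"
  then have "(x, y) \<in> strict_pairs" unfolding strict_pairs_def by simp
  then have "\<theta> (x, y) \<in> strict_pairs" using bij_betw_apply[OF bij] by blast
  then show ?thesis unfolding strict_pairs_def by (simp add: case_prod_beta)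
qed

lemma theta_inj: "x < y \<Longrightarrow> x' < y' \<Longrightarrow> \<theta> (x, y) = \<theta> (x', y') \<Longrightarrow> x = x' \<and> y = y'"
  using inj unfolding inj_on_def strict_pairs_def by blast

lemma rel_exists: "is_max_chain us \<Longrightarrow> \<exists>vs. Rel \<theta> us vs"
  using mono unfolding monotone_on_max_chains_def Rel_def by blast

lemma rel_surj:
  fixes vs :: "'a list"
  assumes vs: "is_max_chain vs" "length vs \<ge> 2"
  shows "\<exists>us. is_max_chain us \<and> Rel \<theta> us vs"
proof -
  let ?m = "length vs"
  let ?M = "{us::'a list. is_max_chain us \<and> length us = ?m}"
  define F where "F us = (SOME ws. Rel \<theta> us ws)" for us
  have FR: "us \<in> ?M \<Longrightarrow> Rel \<theta> us (F us)" for us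
    unfolding F_def using rel_exists by (metis (mono_tags, lifting) mem_Collect_eq someI_ex)
  have fin: "finite ?M" by (rule finite_max_chains)
  have sub: "F ` ?M \<subseteq> ?M" using FR unfolding Rel_def by auto
  have injF: "inj_on F ?M"
  proof (rule inj_onI)
    fix us1 us2 assume u1: "us1 \<in> ?M" and u2: "us2 \<in> ?M" and eq: "F us1 = F us2"
    have "\<theta> ` PP us1 = \<theta> ` PP us2" using rel_image FR[OF u1] FR[OF u2] eq by metis
    then have "PP us1 = PP us2"
      using inj_on_image_eq_iff[OF inj] PP_strict u1 u2 by blast
    then have "set us1 = set us2" using PP_set u1 u2 vs(2) by (metis (mono_tags, lifting) mem_Collect_eq)
    then show "us1 = us2" using sorted_less_unique u1 u2 unfolding is_max_chain_def by blast
  qed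
  have "F ` ?M = ?M" using endo_inj_surj[OF fin sub injF] .
  then have "vs \<in> F ` ?M" using vs by auto
  then show ?thesis using FR by auto
qed

lemma idx_of:
  assumes "is_max_chain us" "x \<in> set us"
  obtains i where "i < length us" "us ! i = x"
  using assms by (metis in_set_conv_nth)

lemma triple_fwd:
  assumes "x < y" "y < z"
  shows "\<exists>a b c. a < b \<and> b < c \<and> \<theta> (x, z) = (a, c) \<and>
     ((\<theta> (x, y) = (a, b) \<and> \<theta> (y, z) = (b, c)) \<or> (\<theta> (y, z) = (a, b) \<and> \<theta> (x, y) = (b, c)))"
proof -
  have "is_chain {x, y, z}" unfolding is_chain_def using assms by auto
  then obtain us where us: "is_max_chain us" "{x, y, z} \<subseteq> set us" using max_chain_exists by metis
  obtain i j k where ijk: "i < length us" "us ! i = x" "j < length us" "us ! j = y" "k < length us" "us ! k = z"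
    using us idx_of by (metis insert_subset)
  have ij: "i < j" "j < k" using ijk assms max_chain_less_iff[OF us(1)] by metis+
  obtain vs where R: "Rel \<theta> us vs" using rel_exists us by blast
  have vs: "is_max_chain vs" "length vs = length us" using R unfolding Rel_def by auto
  let ?m = "length us"
  from R[unfolded Rel_def] consider
      "\<forall>i j. i < j \<and> j < ?m \<longrightarrow> \<theta> (us ! i, us ! j) = (vs ! i, vs ! j)"
    | "\<forall>i j. i < j \<and> j < ?m \<longrightarrow> \<theta> (us ! i, us ! j) = (vs ! (?m - 1 - j), vs ! (?m - 1 - i))"
    by blast
  then show ?thesis
  proof cases
    case 1
    have "\<theta> (x, z) = (vs ! i, vs ! k)" "\<theta> (x, y) = (vs ! i, vs ! j)" "\<theta> (y, z) = (vs ! j, vs ! k)"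
      using 1 ij ijk by auto
    moreover have "vs ! i < vs ! j" "vs ! j < vs ! k" using ij ijk vs max_chain_less[OF vs(1)] by auto
    ultimately show ?thesis by blast
  next
    case 2
    have "\<theta> (x, z) = (vs ! (?m - 1 - k), vs ! (?m - 1 - i))" "\<theta> (x, y) = (vs ! (?m - 1 - j), vs ! (?m - 1 - i))"
       "\<theta> (y, z) = (vs ! (?m - 1 - k), vs ! (?m - 1 - j))"
      using 2 ij ijk by auto
    moreover have "vs ! (?m - 1 - k) < vs ! (?m - 1 - j)" "vs ! (?m - 1 - j) < vs ! (?m - 1 - i)"
      using ij ijk vs max_chain_less[OF vs(1)] by auto
    ultimately show ?thesis by blast
  qed
qed

lemma triple_bwd:
  assumes "a < b" "b < c"
  shows "\<exists>x y z. x < y \<and> y < z \<and> \<theta> (x, z) = (a, c) \<and>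
     ((\<theta> (x, y) = (a, b) \<and> \<theta> (y, z) = (b, c)) \<or> (\<theta> (y, z) = (a, b) \<and> \<theta> (x, y) = (b, c)))"
proof -
  have "is_chain {a, b, c}" unfolding is_chain_def using assms by auto
  then obtain vs where vs: "is_max_chain vs" "{a, b, c} \<subseteq> set vs" using max_chain_exists by metis
  obtain i j k where ijk: "i < length vs" "vs ! i = a" "j < length vs" "vs ! j = b" "k < length vs" "vs ! k = c"
    using vs idx_of by (metis insert_subset)
  have ij: "i < j" "j < k" using ijk assms max_chain_less_iff[OF vs(1)] by metis+
  obtain us where us: "is_max_chain us" and R: "Rel \<theta> us vs" using rel_surj vs ij ijk by fastforce
  have len: "length vs = length us" using R unfolding Rel_def by auto
  let ?m = "length us"
  from R[unfolded Rel_def] consider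
      "\<forall>i j. i < j \<and> j < ?m \<longrightarrow> \<theta> (us ! i, us ! j) = (vs ! i, vs ! j)"
    | "\<forall>i j. i < j \<and> j < ?m \<longrightarrow> \<theta> (us ! i, us ! j) = (vs ! (?m - 1 - j), vs ! (?m - 1 - i))"
    by blast
  then show ?thesis
  proof cases
    case 1
    have "\<theta> (us ! i, us ! k) = (a, c)" "\<theta> (us ! i, us ! j) = (a, b)" "\<theta> (us ! j, us ! k) = (b, c)"
      using 1 ij ijk len by auto
    moreover have "us ! i < us ! j" "us ! j < us ! k" using ij ijk len max_chain_less[OF us] by auto
    ultimately show ?thesis by blast
  next
    case 2
    have e: "?m - 1 - (?m - 1 - t) = t" if "t < ?m" for t using that by simp
    have ar: "?m - 1 - k < ?m - 1 - j" "?m - 1 - j < ?m - 1 - i" "?m - 1 - i < ?m"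
      using ij ijk len by linarith+
    have "\<theta> (us ! (?m - 1 - k), us ! (?m - 1 - i)) = (vs ! i, vs ! k)"
      using 2[rule_format, of "?m - 1 - k" "?m - 1 - i"] ij ijk len e ar by auto
    moreover have "\<theta> (us ! (?m - 1 - k), us ! (?m - 1 - j)) = (vs ! j, vs ! k)"
      using 2[rule_format, of "?m - 1 - k" "?m - 1 - j"] ij ijk len e ar by auto
    moreover have "\<theta> (us ! (?m - 1 - j), us ! (?m - 1 - i)) = (vs ! i, vs ! j)"
      using 2[rule_format, of "?m - 1 - j" "?m - 1 - i"] ij ijk len e ar by auto
    moreover have "us ! (?m - 1 - k) < us ! (?m - 1 - j)" "us ! (?m - 1 - j) < us ! (?m - 1 - i)"
      using ij ijk len max_chain_less[OF us] by auto
    ultimately show ?thesis using ijk by blast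
  qed
qed

end


lemma chain_len_ge:
  fixes x y :: "'a::{order,finite}"
  assumes "C \<subseteq> {z. x \<le> z \<and> z \<le> y}" "is_chain C"
  shows "card C - 1 \<le> chain_len x y"
  unfolding chain_len_def using assms by (intro Max_ge) auto

lemma chain_len_ex:
  fixes x y :: "'a::{order,finite}"
  shows "\<exists>C. C \<subseteq> {z. x \<le> z \<and> z \<le> y} \<and> is_chain C \<and> chain_len x y = card C - 1"
proof -
  have "chain_len x y \<in> (\<lambda>C. card C - 1) ` {C. C \<subseteq> {z. x \<le> z \<and> z \<le> y} \<and> is_chain C}"
    unfolding chain_len_def
    by (rule Max_in) (auto intro!: exI[of _ "{}"] simp: is_chain_def)
  then show ?thesis by auto
qed

lemma chain_len_refl: "chain_len (a::'a::{order,finite}) a = 0"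
proof -
  obtain C where C: "C \<subseteq> {z. a \<le> z \<and> z \<le> a}" "chain_len a a = card C - 1"
    using chain_len_ex by blast
  have "C \<subseteq> {a}" using C(1) by auto
  then have "card C \<le> card {a}" by (rule card_mono[rotated]) simp
  then have "card C \<le> 1" by simp
  then show ?thesis using C(2) by simp
qed

lemma chain_len_max_chain:
  assumes "is_max_chain us" "i < j" "j < length us"
  shows "j - i \<le> chain_len (us ! i) (us ! j :: 'a::{order,finite})"
proof -
  let ?C = "(\<lambda>k. us ! k) ` {i..j}"
  have inj: "inj_on (\<lambda>k. us ! k) {i..j}"
  proof (rule inj_onI)
    fix k l assume "k \<in> {i..j}" "l \<in> {i..j}" "us ! k = us ! l"
    then show "k = l" using max_chain_le_iff[OF assms(1)] assms(3) by (metis atLeastAtMost_iff le_antisym le_less_trans order_refl)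
  qed
  have card: "card ?C = j - i + 1" using card_image[OF inj] assms(2) by simp
  have sub: "?C \<subseteq> {z. us ! i \<le> z \<and> z \<le> us ! j}"
    using max_chain_le_iff[OF assms(1)] assms(3) by auto
  have ch: "is_chain ?C"
    using max_chain_chain[OF assms(1)] assms(3) unfolding is_chain_def by auto
  show ?thesis using chain_len_ge[OF sub ch] card by simp
qed

lemma chain_len_realized:
  fixes x y :: "'a::{order,finite}"
  assumes "x < y"
  shows "\<exists>us i j. is_max_chain us \<and> i < j \<and> j < length us \<and> us ! i = x \<and> us ! j = y \<and> chain_len x y \<le> j - i"
proof -
  obtain C where C: "C \<subseteq> {z. x \<le> z \<and> z \<le> y}" "is_chain C" "chain_len x y = card C - 1"
    using chain_len_ex by blast
  let ?C = "C \<union> {x, y}"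
  have ch: "is_chain ?C" using C(1,2) assms unfolding is_chain_def by auto
  obtain us where us: "is_max_chain us" "?C \<subseteq> set us" using max_chain_exists[OF ch] by blast
  obtain i where i: "i < length us" "us ! i = x" using us by (metis Un_insert_right in_set_conv_nth insert_subset)
  obtain j where j: "j < length us" "us ! j = y" using us by (metis Un_insert_right in_set_conv_nth insert_subset)
  have ij: "i < j" using max_chain_less_iff[OF us(1) i(1) j(1)] i j assms by simp
  have "?C \<subseteq> (\<lambda>k. us ! k) ` {i..j}"
  proof
    fix c assume c: "c \<in> ?C"
    then obtain k where k: "k < length us" "us ! k = c" using us by (metis in_set_conv_nth subsetD)
    have "x \<le> c" "c \<le> y" using c C(1) assms by auto
    then have "i \<le> k" "k \<le> j" using max_chain_le_iff[OF us(1)] i j k by metis+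
    then show "c \<in> (\<lambda>k. us ! k) ` {i..j}" using k by auto
  qed
  then have "card ?C \<le> card ((\<lambda>k. us ! k) ` {i..j})" by (rule card_mono[rotated]) simp
  also have "\<dots> \<le> card {i..j}" by (rule card_image_le) simp
  finally have "card ?C \<le> card {i..j}" .
  moreover have "card C \<le> card ?C" by (rule card_mono) auto
  ultimately have "chain_len x y \<le> j - i" using C(3) by simp
  then show ?thesis using us(1) ij j i by blast
qed

context thsetup
begin

lemma chain_len_theta:
  assumes "x < y"
  shows "chain_len (fst (\<theta> (x, y))) (snd (\<theta> (x, y))) = chain_len x y"
proof (rule antisym)
  obtain a b where ab: "\<theta> (x, y) = (a, b)" by fastforce
  have "a < b" using strict_img[OF assms] ab by simp
  obtain vs i j where vs: "is_max_chain vs" "i < j" "j < length vs" "vs ! i = a" "vs ! j = b"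
      "chain_len a b \<le> j - i"
    using chain_len_realized[OF \<open>a < b\<close>] by blast
  obtain us where us: "is_max_chain us" "Rel \<theta> us vs" using rel_surj[OF vs(1)] vs(2,3) by force
  obtain i' j' where ij': "i' < j'" "j' < length us" "j' - i' = j - i" "\<theta> (us ! i', us ! j') = (vs ! i, vs ! j)"
    using rel_pair_back[OF us(2) vs(2,3)] by blast
  have "us ! i' = x \<and> us ! j' = y"
    using theta_inj[OF max_chain_less[OF us(1) ij'(1,2)] assms] ij'(4) ab vs(4,5) by simp
  then have "j' - i' \<le> chain_len x y" using chain_len_max_chain[OF us(1) ij'(1,2)] by simp
  then show "chain_len (fst (\<theta> (x, y))) (snd (\<theta> (x, y))) \<le> chain_len x y"
    using vs(6) ij'(3) ab by simp
next
  obtain us i j where us: "is_max_chain us" "i < j" "j < length us" "us ! i = x" "us ! j = y"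
      "chain_len x y \<le> j - i"
    using chain_len_realized[OF assms] by blast
  obtain vs where R: "Rel \<theta> us vs" using rel_exists[OF us(1)] by blast
  have vs: "is_max_chain vs" "length vs = length us" using R unfolding Rel_def by auto
  obtain i' j' where ij': "i' < j'" "j' < length us" "j' - i' = j - i" "\<theta> (us ! i, us ! j) = (vs ! i', vs ! j')"
    using rel_pair[OF R us(2,3)] by blast
  have "j' - i' \<le> chain_len (vs ! i') (vs ! j')" using chain_len_max_chain[OF vs(1) ij'(1)] ij'(2) vs(2) by simp
  then show "chain_len x y \<le> chain_len (fst (\<theta> (x, y))) (snd (\<theta> (x, y)))"
    using us ij' by simp
qed

end


definition adj :: "'a::order \<Rightarrow> 'a \<Rightarrow> bool" where
  "adj a b \<longleftrightarrow> covers a b \<or> covers b a"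

fun wk :: "'a::order list \<Rightarrow> bool" where
  "wk (a # b # r) = (adj a b \<and> wk (b # r))"
| "wk _ = True"

lemma adj_sym: "adj a b \<Longrightarrow> adj b a" unfolding adj_def by blast

lemma is_walk_Cons2: "is_walk (a # b # r) \<longleftrightarrow> adj a b \<and> is_walk (b # r)"
proof
  assume h: "is_walk (a # b # r)"
  have "adj a b" using h unfolding is_walk_def adj_def by (metis One_nat_def length_Cons nth_Cons_0 nth_Cons_Suc zero_less_Suc Suc_less_eq)
  moreover have "is_walk (b # r)"
    unfolding is_walk_def
  proof (intro conjI allI impI)
    fix i assume "Suc i < length (b # r)"
    then have "Suc (Suc i) < length (a # b # r)" by simp
    then have "covers ((a # b # r) ! Suc i) ((a # b # r) ! Suc (Suc i)) \<or> covers ((a # b # r) ! Suc (Suc i)) ((a # b # r) ! Suc i)"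
      using h unfolding is_walk_def by blast
    then show "covers ((b # r) ! i) ((b # r) ! Suc i) \<or> covers ((b # r) ! Suc i) ((b # r) ! i)" by simp
  qed simp
  ultimately show "adj a b \<and> is_walk (b # r)" by simp
next
  assume h: "adj a b \<and> is_walk (b # r)"
  show "is_walk (a # b # r)"
    unfolding is_walk_def
  proof (intro conjI allI impI)
    fix i assume i: "Suc i < length (a # b # r)"
    show "covers ((a # b # r) ! i) ((a # b # r) ! Suc i) \<or> covers ((a # b # r) ! Suc i) ((a # b # r) ! i)"
    proof (cases i)
      case 0 then show ?thesis using h unfolding adj_def by simp
    next
      case (Suc k)
      then have "Suc k < length (b # r)" using i by simp
      then show ?thesis using h Suc unfolding is_walk_def by simp
    qed
  qed simp
qed

lemma is_walk_single: "is_walk [a]" unfolding is_walk_def by simp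

lemma is_walk_wk: "is_walk us \<longleftrightarrow> us \<noteq> [] \<and> wk us"
proof (induction us rule: wk.induct)
  case (1 a b r)
  then show ?case using is_walk_Cons2 by auto
next
  case ("2_1")
  then show ?case unfolding is_walk_def by simp
next
  case ("2_2" a)
  then show ?case using is_walk_single by simp
qed

lemma wk_Cons: "wk (a # r) \<Longrightarrow> wk r"
  by (cases r) auto

lemma wk_append: "xs \<noteq> [] \<Longrightarrow> ys \<noteq> [] \<Longrightarrow> wk xs \<Longrightarrow> wk ys \<Longrightarrow> adj (last xs) (hd ys) \<Longrightarrow> wk (xs @ ys)"
proof (induction xs rule: wk.induct)
  case (1 a b r)
  then show ?case by simp
next
  case ("2_2" a)
  then show ?case by (cases ys) auto
qed simp

lemma wk_rev: "wk xs \<Longrightarrow> wk (rev xs)"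
proof (induction xs rule: wk.induct)
  case (1 a b r)
  have "wk (rev (b # r) @ [a])"
    by (rule wk_append) (use 1 adj_sym in auto)
  then show ?case by simp
qed auto

definition tinv :: "('a::order \<times> 'a \<Rightarrow> 'a \<times> 'a) \<Rightarrow> 'a \<times> 'a \<Rightarrow> 'a \<times> 'a" where
  "tinv \<theta> p = inv_into strict_pairs \<theta> p"

definition stp :: "('a::order \<times> 'a \<Rightarrow> 'a \<times> 'a) \<Rightarrow> 'a \<Rightarrow> 'a \<Rightarrow> 'a \<Rightarrow> 'k::field" where
  "stp \<theta> z a b = (if a < b then of_bool (snd (tinv \<theta> (a, b)) = z) - of_bool (fst (tinv \<theta> (a, b)) = z)
     else if b < a then of_bool (fst (tinv \<theta> (b, a)) = z) - of_bool (snd (tinv \<theta> (b, a)) = z) else 0)"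

fun wsum :: "('a::order \<times> 'a \<Rightarrow> 'a \<times> 'a) \<Rightarrow> 'a \<Rightarrow> 'a list \<Rightarrow> 'k::field" where
  "wsum \<theta> z (a # b # r) = stp \<theta> z a b + wsum \<theta> z (b # r)"
| "wsum \<theta> z _ = 0"

lemma stp_anti: "stp \<theta> z b a = - stp \<theta> z a b"
  unfolding stp_def by auto

lemma wsum_append: "xs \<noteq> [] \<Longrightarrow> ys \<noteq> [] \<Longrightarrow> wsum \<theta> z (xs @ ys) = wsum \<theta> z xs + stp \<theta> z (last xs) (hd ys) + wsum \<theta> z ys"
proof (induction xs rule: wk.induct)
  case (1 a b r)
  then show ?case by simp
next
  case ("2_2" a)
  then show ?case by (cases ys) auto
qed simp

lemma wsum_rev: "wsum \<theta> z (rev xs) = - (wsum \<theta> z xs :: 'k::field)"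
proof (induction xs rule: wk.induct)
  case (1 a b r)
  have "wsum \<theta> z (rev (b # r) @ [a]) = (wsum \<theta> z (rev (b # r)) :: 'k) + stp \<theta> z b a"
    by (subst wsum_append) auto
  then show ?case using 1 stp_anti[of \<theta> z b a] by simp
qed auto

lemma wsum_nth: "wsum \<theta> z us = (\<Sum>i<length us - 1. stp \<theta> z (us ! i) (us ! Suc i) :: 'k::field)"
proof (induction us rule: wk.induct)
  case (1 a b r)
  have "(\<Sum>i<length (a # b # r) - 1. stp \<theta> z ((a # b # r) ! i) ((a # b # r) ! Suc i) :: 'k)
      = stp \<theta> z a b + (\<Sum>i<length (b # r) - 1. stp \<theta> z ((b # r) ! i) ((b # r) ! Suc i))"
    by (simp add: sum.lessThan_Suc_shift del: sum.lessThan_Suc)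
  then show ?case using 1 by simp
qed auto


locale thsetup2 = thsetup \<theta> for \<theta> :: "'a::{order,finite} \<times> 'a \<Rightarrow> 'a \<times> 'a" +
  assumes conn: "poset_connected TYPE('a)"
    and adm: "admissible \<theta>"
begin

lemma tinv_props:
  assumes "a < b"
  shows "fst (tinv \<theta> (a, b)) < snd (tinv \<theta> (a, b)) \<and> \<theta> (tinv \<theta> (a, b)) = (a, b)"
proof -
  have ab: "(a, b) \<in> \<theta> ` strict_pairs" using assms bij unfolding bij_betw_def strict_pairs_def by auto
  have "tinv \<theta> (a, b) \<in> strict_pairs" unfolding tinv_def using inv_into_into[OF ab] .
  moreover have "\<theta> (tinv \<theta> (a, b)) = (a, b)" unfolding tinv_def using f_inv_into_f[OF ab] .
  ultimately show ?thesis unfolding strict_pairs_def by (simp add: case_prod_beta)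
qed

lemma tinv_theta:
  assumes "x < y"
  shows "tinv \<theta> (\<theta> (x, y)) = (x, y)"
  unfolding tinv_def using inv_into_f_f[OF inj] assms unfolding strict_pairs_def by simp

lemma tinv_eq:
  assumes "x < y" "\<theta> (x, y) = (a, b)"
  shows "tinv \<theta> (a, b) = (x, y)"
  using tinv_theta assms by metis

lemma ex_fst:
  assumes "a < b"
  shows "(\<exists>w. z < w \<and> \<theta> (z, w) = (a, b)) \<longleftrightarrow> fst (tinv \<theta> (a, b)) = z"
proof
  assume "\<exists>w. z < w \<and> \<theta> (z, w) = (a, b)"
  then obtain w where "z < w" "\<theta> (z, w) = (a, b)" by blast
  then show "fst (tinv \<theta> (a, b)) = z" using tinv_eq by simp
next
  assume h: "fst (tinv \<theta> (a, b)) = z"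
  show "\<exists>w. z < w \<and> \<theta> (z, w) = (a, b)"
    using tinv_props[OF assms] h by (intro exI[of _ "snd (tinv \<theta> (a, b))"]) auto
qed

lemma ex_snd:
  assumes "a < b"
  shows "(\<exists>w. w < z \<and> \<theta> (w, z) = (a, b)) \<longleftrightarrow> snd (tinv \<theta> (a, b)) = z"
proof
  assume "\<exists>w. w < z \<and> \<theta> (w, z) = (a, b)"
  then obtain w where "w < z" "\<theta> (w, z) = (a, b)" by blast
  then show "snd (tinv \<theta> (a, b)) = z" using tinv_eq by simp
next
  assume h: "snd (tinv \<theta> (a, b)) = z"
  show "\<exists>w. w < z \<and> \<theta> (w, z) = (a, b)"
    using tinv_props[OF assms] h by (intro exI[of _ "fst (tinv \<theta> (a, b))"]) auto
qed

lemma wsum_closed: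
  assumes cw: "is_closed_walk us"
  shows "wsum \<theta> z us = (0 :: 'k::field)"
proof -
  let ?n = "length us - 1"
  let ?up = "\<lambda>i. us ! i < us ! Suc i"
  let ?dn = "\<lambda>i. us ! Suc i < us ! i"
  define A where "A = {i. Suc i < length us \<and> ?up i \<and> snd (tinv \<theta> (us ! i, us ! Suc i)) = z}"
  define B where "B = {i. Suc i < length us \<and> ?up i \<and> fst (tinv \<theta> (us ! i, us ! Suc i)) = z}"
  define C where "C = {i. Suc i < length us \<and> ?dn i \<and> fst (tinv \<theta> (us ! Suc i, us ! i)) = z}"
  define D where "D = {i. Suc i < length us \<and> ?dn i \<and> snd (tinv \<theta> (us ! Suc i, us ! i)) = z}"
  have stp_split: "stp \<theta> z (us ! i) (us ! Suc i) =
      (of_bool (?up i \<and> snd (tinv \<theta> (us ! i, us ! Suc i)) = z) - of_bool (?up i \<and> fst (tinv \<theta> (us ! i, us ! Suc i)) = z)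
      + of_bool (?dn i \<and> fst (tinv \<theta> (us ! Suc i, us ! i)) = z) - of_bool (?dn i \<and> snd (tinv \<theta> (us ! Suc i, us ! i)) = z) :: 'k)" for i
    unfolding stp_def by auto
  have cnt: "(\<Sum>i<?n. of_bool (P i) :: 'k) = of_nat (card {i. Suc i < length us \<and> P i})" for P
  proof -
    have "(\<Sum>i<?n. of_bool (P i) :: 'k) = of_nat (card ({..<?n} \<inter> {i. P i}))" by (rule sum_of_bool_eq) simp_all
    moreover have "{..<?n} \<inter> {i. P i} = {i. Suc i < length us \<and> P i}" by auto
    ultimately show ?thesis by simp
  qed
  have "wsum \<theta> z us = (\<Sum>i<?n. stp \<theta> z (us ! i) (us ! Suc i) :: 'k)" by (rule wsum_nth)
  also have "\<dots> = of_nat (card A) - of_nat (card B) + of_nat (card C) - of_nat (card D)"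
    unfolding stp_split sum.distrib sum_subtractf cnt A_def B_def C_def D_def by simp
  finally have w: "wsum \<theta> z us = (of_nat (card A) - of_nat (card B) + of_nat (card C) - of_nat (card D) :: 'k)" .
  have "A = {i. Suc i < length us \<and> us ! i < us ! Suc i \<and> (\<exists>w. w < z \<and> \<theta> (w, z) = (us ! i, us ! Suc i))}"
    unfolding A_def using ex_snd by blast
  then have At: "card A = t_plus \<theta> us z" unfolding t_plus_def by simp
  have "B = {i. Suc i < length us \<and> us ! i < us ! Suc i \<and> (\<exists>w. z < w \<and> \<theta> (z, w) = (us ! i, us ! Suc i))}"
    unfolding B_def using ex_fst by blast
  then have Bs: "card B = s_plus \<theta> us z" unfolding s_plus_def by simp
  have "C = {i. Suc i < length us \<and> us ! i > us ! Suc i \<and> (\<exists>w. z < w \<and> \<theta> (z, w) = (us ! Suc i, us ! i))}"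
    unfolding C_def using ex_fst by blast
  then have Cs: "card C = s_minus \<theta> us z" unfolding s_minus_def by simp
  have "D = {i. Suc i < length us \<and> us ! i > us ! Suc i \<and> (\<exists>w. w < z \<and> \<theta> (w, z) = (us ! Suc i, us ! i))}"
    unfolding D_def using ex_snd by blast
  then have Dt: "card D = t_minus \<theta> us z" unfolding t_minus_def by simp
  have "int (s_plus \<theta> us z) - int (s_minus \<theta> us z) = int (t_plus \<theta> us z) - int (t_minus \<theta> us z)"
    using adm cw unfolding admissible_def by blast
  then have "(of_int (int (s_plus \<theta> us z) - int (s_minus \<theta> us z)) :: 'k) = of_int (int (t_plus \<theta> us z) - int (t_minus \<theta> us z))"
    by simp
  then have "(of_nat (card B) - of_nat (card C) :: 'k) = of_nat (card A) - of_nat (card D)"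
    using At Bs Cs Dt by simp
  then show ?thesis using w by (simp add: algebra_simps)
qed


lemma walk_exists:
  fixes x y :: 'a
  shows "\<exists>w. is_walk w \<and> hd w = x \<and> last w = y"
  using conn unfolding poset_connected_def by blast

lemma aux_ag: "a + s = (0::'b::ab_group_add) \<Longrightarrow> - b = s \<Longrightarrow> a = b"
proof -
  assume 1: "a + s = 0" and 2: "- b = s"
  then have "a + - b = 0" by simp
  then show "a = b" by simp
qed

lemma walk_indep:
  assumes w1: "is_walk w1" and w2: "is_walk w2" and h: "hd w1 = hd w2" and l: "last w1 = last w2"
  shows "wsum \<theta> z w1 = (wsum \<theta> z w2 :: 'k::field)"
proof -
  have w1ne: "w1 \<noteq> []" and w2ne: "w2 \<noteq> []" using w1 w2 unfolding is_walk_def by auto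
  have rne: "rev w2 \<noteq> []" using w2ne by simp
  have rv: "rev w2 = last w2 # tl (rev w2)"
    by (subst hd_rev[symmetric]) (rule list.collapse[OF rne, symmetric])
  show ?thesis
  proof (cases "tl (rev w2) = []")
    case True
    have rr: "rev w2 = [last w2]" using rv unfolding True .
    have "w2 = [last w2]" using rr by (simp only: rev_singleton_conv)
    then obtain x where v: "w2 = [x]" by blast
    have "hd w1 = last w1" using h l v by simp
    then have "is_closed_walk w1" using w1 unfolding is_closed_walk_def by simp
    then have "wsum \<theta> z w1 = (0::'k)" by (rule wsum_closed)
    moreover have "wsum \<theta> z w2 = (0::'k)" by (subst v) simp
    ultimately show ?thesis by simp
  next
    case False
    define ys where "ys = tl (rev w2)"
    obtain y ys' where yy: "ys = y # ys'" using False unfolding ys_def by (cases "tl (rev w2)") auto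
    have rv2: "rev w2 = last w2 # y # ys'" using rv yy unfolding ys_def by simp
    have wkr: "wk (rev w2)" using wk_rev w2 is_walk_wk by blast
    then have a: "adj (last w2) y" and wky: "wk ys" using rv2 yy by simp_all
    have lys: "last ys = hd w2"
    proof -
      have "last (rev w2) = hd w2" using w2ne by (simp add: last_rev)
      then show ?thesis using rv2 yy by simp
    qed
    have W: "is_closed_walk (w1 @ ys)"
      unfolding is_closed_walk_def is_walk_wk
    proof (intro conjI)
      show "w1 @ ys \<noteq> []" using w1ne by simp
      show "wk (w1 @ ys)"
      proof -
        have "wk w1" using w1 is_walk_wk by blast
        then show ?thesis using wk_append[of w1 ys] w1ne yy wky a l by simp
      qed
      show "hd (w1 @ ys) = last (w1 @ ys)" using w1ne yy lys h by simp
    qed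
    have "wsum \<theta> z (w1 @ ys) = (wsum \<theta> z w1 :: 'k) + stp \<theta> z (last w1) y + wsum \<theta> z ys"
      using wsum_append[of w1 ys \<theta> z] w1ne yy by simp
    moreover have "wsum \<theta> z (rev w2) = (stp \<theta> z (last w2) y :: 'k) + wsum \<theta> z ys"
      unfolding rv2 yy by (simp only: wsum.simps(1))
    moreover have "wsum \<theta> z (w1 @ ys) = (0::'k)" using W by (rule wsum_closed)
    moreover have "wsum \<theta> z (rev w2) = - (wsum \<theta> z w2 :: 'k)" by (rule wsum_rev)
    ultimately show ?thesis using l aux_ag[of "wsum \<theta> z w1" "stp \<theta> z (last w2) y + wsum \<theta> z ys" "wsum \<theta> z w2"] by (simp add: add.assoc)
  qed
qed

definition dpot :: "'a \<Rightarrow> 'a \<Rightarrow> 'k::field" where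
  "dpot z u = wsum \<theta> z (SOME w. is_walk w \<and> hd w = undefined \<and> last w = u)"

lemma dpot_walk:
  assumes a: "is_walk w" "hd w = undefined" "last w = u"
  shows "(dpot z u :: 'k::field) = wsum \<theta> z w"
proof -
  let ?w = "SOME w. is_walk w \<and> hd w = undefined \<and> last w = u"
  have s: "is_walk ?w \<and> hd ?w = undefined \<and> last ?w = u" using walk_exists by (rule someI_ex)
  have "(wsum \<theta> z ?w :: 'k) = wsum \<theta> z w"
    by (rule walk_indep) (use s a in auto)
  then show ?thesis unfolding dpot_def by simp
qed

lemma dpot_root: "(dpot z undefined :: 'k::field) = 0"
  using dpot_walk[OF is_walk_single, of undefined undefined] by simp

lemma dpot_step:
  assumes "adj u v"
  shows "(dpot z v :: 'k::field) = dpot z u + stp \<theta> z u v"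
proof -
  obtain w where w: "is_walk w" "hd w = undefined" "last w = u" using walk_exists by blast
  have iw: "is_walk (w @ [v])" unfolding is_walk_wk
    using w assms is_walk_wk wk_append[of w "[v]"] by auto
  have hw: "hd (w @ [v]) = undefined" using w unfolding is_walk_def by simp
  have "(dpot z v :: 'k) = wsum \<theta> z (w @ [v])" by (rule dpot_walk[OF iw hw]) simp
  also have "\<dots> = wsum \<theta> z w + stp \<theta> z u v" using wsum_append[of w "[v]"] w unfolding is_walk_def by simp
  moreover have "(dpot z u :: 'k) = wsum \<theta> z w" by (rule dpot_walk[OF w])
  ultimately show ?thesis by simp
qed

definition cc :: "'a \<Rightarrow> 'a \<times> 'a \<Rightarrow> 'k::field" where
  "cc z p = of_bool (fst p = z) - of_bool (snd p = z)"

lemma gen_eq: "v' = u' + (a - b) \<Longrightarrow> u' - v' = b - (a::'b::field)" by simp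

lemma dpot_cover:
  assumes "covers v u"
  shows "(dpot z u - dpot z v :: 'k::field) = cc z (tinv \<theta> (u, v))"
proof -
  have "u < v" using assms unfolding covers_def by simp
  have "adj u v" using assms unfolding adj_def by simp
  then have e: "dpot z v = dpot z u + (of_bool (snd (tinv \<theta> (u, v)) = z) - of_bool (fst (tinv \<theta> (u, v)) = z))"
    using dpot_step[of u v z] \<open>u < v\<close> unfolding stp_def by simp
  show ?thesis unfolding cc_def by (rule gen_eq[OF e])
qed

lemma cc_add:
  assumes "u < w" "w < v"
  shows "(cc z (tinv \<theta> (u, v)) :: 'k::field) = cc z (tinv \<theta> (u, w)) + cc z (tinv \<theta> (w, v))"
proof -
  obtain x y t where xyt: "x < y" "y < t" "\<theta> (x, t) = (u, v)"
      "(\<theta> (x, y) = (u, w) \<and> \<theta> (y, t) = (w, v)) \<or> (\<theta> (y, t) = (u, w) \<and> \<theta> (x, y) = (w, v))"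
    using triple_bwd[OF assms] by blast
  have xt: "x < t" using xyt by simp
  have e1: "tinv \<theta> (u, v) = (x, t)" using tinv_eq[OF xt xyt(3)] .
  from xyt(4) show ?thesis
  proof
    assume h: "\<theta> (x, y) = (u, w) \<and> \<theta> (y, t) = (w, v)"
    then have "tinv \<theta> (u, w) = (x, y)" "tinv \<theta> (w, v) = (y, t)" using tinv_eq xyt by auto
    then show ?thesis using e1 unfolding cc_def by simp
  next
    assume h: "\<theta> (y, t) = (u, w) \<and> \<theta> (x, y) = (w, v)"
    then have "tinv \<theta> (u, w) = (y, t)" "tinv \<theta> (w, v) = (x, y)" using tinv_eq xyt by auto
    then show ?thesis using e1 unfolding cc_def by simp
  qed
qed

lemma dpot_strict_aux:
  "\<forall>u v::'a. u < v \<and> card {t. u < t \<and> t < v} = n \<longrightarrow> dpot z u - dpot z v = (cc z (tinv \<theta> (u, v)) :: 'k::field)"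
proof (induction n rule: less_induct)
  case (less n)
  show ?case
  proof (intro allI impI)
    fix u v :: 'a assume uv: "u < v \<and> card {t. u < t \<and> t < v} = n"
    show "dpot z u - dpot z v = (cc z (tinv \<theta> (u, v)) :: 'k)"
    proof (cases "covers v u")
      case True then show ?thesis using dpot_cover by blast
    next
      case False
      then obtain w where w: "u < w" "w < v" using uv unfolding covers_def by blast
      have s1: "{t. u < t \<and> t < w} \<subset> {t. u < t \<and> t < v}"
      proof (rule psubsetI)
        show "{t. u < t \<and> t < w} \<subseteq> {t. u < t \<and> t < v}" using w(2) less_trans by blast
        have "w \<in> {t. u < t \<and> t < v}" "w \<notin> {t. u < t \<and> t < w}" using w by simp_all
        then show "{t. u < t \<and> t < w} \<noteq> {t. u < t \<and> t < v}" by blast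
      qed
      have c1: "card {t. u < t \<and> t < w} < n" using psubset_card_mono[OF _ s1] uv by simp
      have s2: "{t. w < t \<and> t < v} \<subset> {t. u < t \<and> t < v}"
      proof (rule psubsetI)
        show "{t. w < t \<and> t < v} \<subseteq> {t. u < t \<and> t < v}" using w(1) less_trans by blast
        have "w \<in> {t. u < t \<and> t < v}" "w \<notin> {t. w < t \<and> t < v}" using w by simp_all
        then show "{t. w < t \<and> t < v} \<noteq> {t. u < t \<and> t < v}" by blast
      qed
      have c2: "card {t. w < t \<and> t < v} < n" using psubset_card_mono[OF _ s2] uv by simp
      have "dpot z u - dpot z w = (cc z (tinv \<theta> (u, w)) :: 'k)"
        using less.IH[OF c1, THEN spec[of _ u], THEN spec[of _ w]] w(1) by blast
      moreover have "dpot z w - dpot z v = (cc z (tinv \<theta> (w, v)) :: 'k)"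
        using less.IH[OF c2, THEN spec[of _ w], THEN spec[of _ v]] w(2) by blast
      moreover have "(cc z (tinv \<theta> (u, v)) :: 'k) = cc z (tinv \<theta> (u, w)) + cc z (tinv \<theta> (w, v))"
        by (rule cc_add[OF w])
      ultimately show ?thesis by (simp add: algebra_simps)
    qed
  qed
qed

lemma dpot_strict:
  assumes "u < v"
  shows "dpot z u - dpot z v = (cc z (tinv \<theta> (u, v)) :: 'k::field)"
  using dpot_strict_aux[of "card {t. u < t \<and> t < v}" z, THEN spec[of _ u], THEN spec[of _ v]] assms by blast

lemma dpot_theta:
  assumes "x < y"
  shows "dpot z (fst (\<theta> (x, y))) - dpot z (snd (\<theta> (x, y))) = (of_bool (x = z) - of_bool (y = z) :: 'k::field)"
proof -
  have s: "fst (\<theta> (x, y)) < snd (\<theta> (x, y))" using strict_img[OF assms] .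
  have "dpot z (fst (\<theta> (x, y))) - dpot z (snd (\<theta> (x, y))) = (cc z (tinv \<theta> (fst (\<theta> (x, y)), snd (\<theta> (x, y)))) :: 'k)"
    using dpot_strict[OF s] by simp
  also have "tinv \<theta> (fst (\<theta> (x, y)), snd (\<theta> (x, y))) = (x, y)" using tinv_theta[OF assms] by simp
  finally show ?thesis unfolding cc_def by simp
qed

end


lemma sum_ofbool_UNIV: "(\<Sum>z\<in>(UNIV::'a::finite set). h z * of_bool (x = z)) = (h x :: 'b::comm_ring_1)"
proof -
  have "(\<Sum>z\<in>(UNIV::'a set). h z * of_bool (x = z)) = (\<Sum>z\<in>UNIV. if x = z then h z else 0)"
    by (rule sum.cong) auto
  then show ?thesis by simp
qed

locale thsetup3 = thsetup2 \<theta> for \<theta> :: "'a::{order,finite} \<times> 'a \<Rightarrow> 'a \<times> 'a" +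
  fixes \<sigma> :: "'a \<Rightarrow> 'a \<Rightarrow> 'k::field"
  assumes sigma_units: "\<forall>x y. x < y \<longrightarrow> \<sigma> x y \<noteq> 0"
    and compat: "compatible \<sigma> \<theta>"
begin

definition Dp :: "'a \<Rightarrow> 'a \<Rightarrow> 'k" where
  "Dp z u = dpot z u + of_bool (z = undefined)"

lemma Dp_diff:
  assumes "x < y"
  shows "(\<Sum>z\<in>UNIV. h z * Dp z (fst (\<theta> (x, y)))) - (\<Sum>z\<in>UNIV. h z * Dp z (snd (\<theta> (x, y)))) = h x - h y"
proof -
  have "(\<Sum>z\<in>UNIV. h z * Dp z (fst (\<theta> (x, y)))) - (\<Sum>z\<in>UNIV. h z * Dp z (snd (\<theta> (x, y))))
      = (\<Sum>z\<in>UNIV. h z * (Dp z (fst (\<theta> (x, y))) - Dp z (snd (\<theta> (x, y)))))"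
    by (simp add: sum_subtractf right_diff_distrib)
  also have "\<dots> = (\<Sum>z\<in>UNIV. h z * (of_bool (x = z) - of_bool (y = z)))"
  proof (rule sum.cong)
    fix z
    have "Dp z (fst (\<theta> (x, y))) - Dp z (snd (\<theta> (x, y))) = dpot z (fst (\<theta> (x, y))) - dpot z (snd (\<theta> (x, y)))"
      unfolding Dp_def by simp
    also have "\<dots> = (of_bool (x = z) - of_bool (y = z) :: 'k)" by (rule dpot_theta[OF assms])
    finally show "h z * (Dp z (fst (\<theta> (x, y))) - Dp z (snd (\<theta> (x, y)))) = h z * (of_bool (x = z) - of_bool (y = z))"
      by simp
  qed simp
  also have "\<dots> = (\<Sum>z\<in>UNIV. h z * of_bool (x = z)) - (\<Sum>z\<in>UNIV. h z * of_bool (y = z))"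
    by (simp add: sum_subtractf right_diff_distrib)
  also have "\<dots> = h x - h y" by (simp add: sum_ofbool_UNIV)
  finally show ?thesis .
qed

lemma Dp_root: "Dp z undefined = of_bool (undefined = z)"
  unfolding Dp_def using dpot_root[of z] by auto

lemma const_along_wk:
  assumes eq: "\<And>u v. adj u v \<Longrightarrow> g u = g v"
  shows "wk w \<Longrightarrow> w \<noteq> [] \<Longrightarrow> g (hd w) = g (last w)"
proof (induction w rule: wk.induct)
  case (1 a b r)
  have ab: "adj a b" and wr: "wk (b # r)" using "1.prems"(1) by simp_all
  have "g a = g b" by (rule eq[OF ab])
  moreover have "g (hd (b # r)) = g (last (b # r))" using "1.IH"[OF wr] by simp
  ultimately show ?case by simp
qed auto

lemma T_inj:
  assumes h0: "\<forall>a. (\<Sum>z\<in>UNIV. \<nu> z * Dp z a) = 0"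
  shows "\<nu> z = 0"
proof -
  have lt: "\<nu> x = \<nu> y" if "x < y" for x y
    using Dp_diff[OF that, of \<nu>] h0 by simp
  have adjeq: "\<nu> u = \<nu> v" if "adj u v" for u v
  proof -
    from that have "u < v \<or> v < u" unfolding adj_def covers_def by blast
    then show ?thesis using lt[of u v] lt[of v u] by auto
  qed
  have all: "\<nu> x = \<nu> undefined" for x
  proof -
    obtain w where w: "is_walk w" "hd w = undefined" "last w = x" using walk_exists by blast
    then have "wk w" "w \<noteq> []" using is_walk_wk by auto
    then have "\<nu> (hd w) = \<nu> (last w)" using const_along_wk[of \<nu> w, OF adjeq] by blast
    then show ?thesis using w by simp
  qed
  have "0 = (\<Sum>z\<in>UNIV. \<nu> z * Dp z undefined)" using h0 by simp
  also have "\<dots> = (\<Sum>z\<in>UNIV. \<nu> z * of_bool (undefined = z))"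
    by (simp add: Dp_root)
  also have "\<dots> = \<nu> undefined" by (rule sum_ofbool_UNIV)
  finally show ?thesis using all[of z] by simp
qed

lemma T_surj: "\<exists>lam. \<forall>a. (\<Sum>z\<in>UNIV. lam z * Dp z a) = h a"
proof -
  define A where "A = (\<chi> a z. Dp z a)"
  have comp: "(A *v p) $ a = (\<Sum>z\<in>UNIV. p $ z * Dp z a)" for p a
    unfolding A_def matrix_vector_mult_def by (simp add: mult.commute)
  have "inj ((*v) A)"
  proof (rule injI)
    fix p q assume pq: "A *v p = A *v q"
    have "\<forall>a. (\<Sum>z\<in>UNIV. (p $ z - q $ z) * Dp z a) = 0"
    proof
      fix a
      have "(\<Sum>z\<in>UNIV. (p $ z - q $ z) * Dp z a) = (A *v p) $ a - (A *v q) $ a"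
        unfolding comp by (simp add: sum_subtractf left_diff_distrib)
      then show "(\<Sum>z\<in>UNIV. (p $ z - q $ z) * Dp z a) = 0" using pq by simp
    qed
    then have "p $ z - q $ z = 0" for z using T_inj[of "\<lambda>z. p $ z - q $ z"] by blast
    then show "p = q" by (simp add: vec_eq_iff)
  qed
  then have "surj ((*v) A)" using vec.linear_inj_imp_surj[OF matrix_vector_mul_linear_gen] by blast
  then obtain p where p: "(\<chi> a. h a) = A *v p" by (rule surjE)
  have "\<forall>a. (\<Sum>z\<in>UNIV. p $ z * Dp z a) = h a"
  proof
    fix a
    have "(A *v p) $ a = h a" using p[symmetric] by simp
    then show "(\<Sum>z\<in>UNIV. p $ z * Dp z a) = h a" using comp by simp
  qed
  then show ?thesis by blast
qed

end


lemma interval_split: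
  fixes x y :: "'a::order"
  assumes "x < y"
  shows "{t. x \<le> t \<and> t \<le> y} = insert x (insert y {t. x < t \<and> t < y})"
  using assms by (auto simp: order_le_less)

lemma inc_mult_split:
  fixes F G :: "'a::{order,finite} \<Rightarrow> 'a \<Rightarrow> 'k::field"
  assumes "x < y"
  shows "inc_mult F G x y = F x x * G x y + F x y * G y y + (\<Sum>t\<in>{t. x < t \<and> t < y}. F x t * G t y)"
proof -
  have "inc_mult F G x y = (\<Sum>t\<in>insert x (insert y {t. x < t \<and> t < y}). F x t * G t y)"
    unfolding inc_mult_def interval_split[OF assms] ..
  also have "\<dots> = F x x * G x y + (F x y * G y y + (\<Sum>t\<in>{t. x < t \<and> t < y}. F x t * G t y))"
    using assms by (simp add: sum.insert)
  finally show ?thesis by (simp add: add.assoc)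
qed

lemma inc_mult_diag:
  fixes F G :: "'a::{order,finite} \<Rightarrow> 'a \<Rightarrow> 'k::field"
  shows "inc_mult F G a a = F a a * G a a"
proof -
  have "{t. a \<le> t \<and> t \<le> a} = {a}" by auto
  then show ?thesis unfolding inc_mult_def by simp
qed

lemma inc_mult_nle:
  fixes F G :: "'a::{order,finite} \<Rightarrow> 'a \<Rightarrow> 'k::field"
  assumes "\<not> a \<le> b"
  shows "inc_mult F G a b = 0"
proof -
  have e: "{t. a \<le> t \<and> t \<le> b} = {}" using assms order_trans by blast
  show ?thesis unfolding inc_mult_def e by simp
qed

lemma inc_e_mult:
  fixes a s b :: "'a::{order,finite}"
  assumes "a < s" "s < b"
  shows "inc_mult (inc_e a s) (inc_e s b) = (inc_e a b :: 'a \<Rightarrow> 'a \<Rightarrow> 'k::field)"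
proof (intro ext)
  fix p q
  show "inc_mult (inc_e a s) (inc_e s b) p q = (inc_e a b p q :: 'k)" (is "?L = ?R")
  proof -
    have "?L = (\<Sum>t\<in>{t. p \<le> t \<and> t \<le> q}. if t = s then ?R else 0)"
      unfolding inc_mult_def inc_e_def by (rule sum.cong) auto
    also have "\<dots> = (if s \<in> {t. p \<le> t \<and> t \<le> q} then ?R else 0)"
      by (rule sum.delta) simp
    also have "\<dots> = ?R"
      unfolding inc_e_def using assms by auto
    finally show ?thesis .
  qed
qed

context thsetup3
begin

definition phi :: "('a \<Rightarrow> 'a \<Rightarrow> 'k) \<Rightarrow> 'a \<Rightarrow> 'a \<Rightarrow> 'k" where
  "phi f a b = (if a < b then \<sigma> (fst (tinv \<theta> (a, b))) (snd (tinv \<theta> (a, b))) * f (fst (tinv \<theta> (a, b))) (snd (tinv \<theta> (a, b)))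
     else if a = b then (\<Sum>z\<in>UNIV. f z z * Dp z a) else 0)"

lemma phi_diag: "phi f a a = (\<Sum>z\<in>UNIV. f z z * Dp z a)"
  unfolding phi_def by simp

lemma phi_nle: "\<not> a \<le> b \<Longrightarrow> phi f a b = 0"
  unfolding phi_def by auto

lemma phi_pair:
  assumes "x < y" "\<theta> (x, y) = (a, b)"
  shows "phi f a b = \<sigma> x y * f x y"
proof -
  have "a < b" using strict_img[OF assms(1)] assms(2) by simp
  moreover have "tinv \<theta> (a, b) = (x, y)" using tinv_eq[OF assms] .
  ultimately show ?thesis unfolding phi_def by simp
qed

lemma compat_dir:
  assumes "x < t" "t < y" "\<theta> (x, y) = (a, b)" "\<theta> (x, t) = (a, s)" "\<theta> (t, y) = (s, b)"
  shows "\<sigma> x y = \<sigma> x t * \<sigma> t y"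
proof -
  have as: "a < s" using strict_img[OF assms(1)] assms(4) by simp
  have sb: "s < b" using strict_img[OF assms(2)] assms(5) by simp
  have "(inc_e (fst (\<theta> (x, y))) (snd (\<theta> (x, y))) :: 'a \<Rightarrow> 'a \<Rightarrow> 'k) =
        inc_mult (inc_e (fst (\<theta> (x, t))) (snd (\<theta> (x, t)))) (inc_e (fst (\<theta> (t, y))) (snd (\<theta> (t, y))))"
    using assms(3-5) inc_e_mult[OF as sb, where 'k='k] by simp
  then show ?thesis using compat assms(1,2) unfolding compatible_def by blast
qed

lemma compat_rev:
  assumes "x < t" "t < y" "\<theta> (x, y) = (a, b)" "\<theta> (t, y) = (a, s)" "\<theta> (x, t) = (s, b)"
  shows "\<sigma> x y = - (\<sigma> x t * \<sigma> t y)"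
proof -
  have as: "a < s" using strict_img[OF assms(2)] assms(4) by simp
  have sb: "s < b" using strict_img[OF assms(1)] assms(5) by simp
  have "(inc_e (fst (\<theta> (x, y))) (snd (\<theta> (x, y))) :: 'a \<Rightarrow> 'a \<Rightarrow> 'k) =
        inc_mult (inc_e (fst (\<theta> (t, y))) (snd (\<theta> (t, y)))) (inc_e (fst (\<theta> (x, t))) (snd (\<theta> (x, t))))"
    using assms(3-5) inc_e_mult[OF as sb, where 'k='k] by simp
  then show ?thesis using compat assms(1,2) unfolding compatible_def by blast
qed

definition jj :: "'a \<Rightarrow> 'a \<Rightarrow> 'a \<Rightarrow> 'a" where
  "jj a s x = (if fst (tinv \<theta> (a, s)) = x then snd (tinv \<theta> (a, s)) else fst (tinv \<theta> (a, s)))"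

definition ii :: "'a \<Rightarrow> 'a \<Rightarrow> 'a \<Rightarrow> 'a" where
  "ii x t a = (if fst (\<theta> (x, t)) = a then snd (\<theta> (x, t)) else fst (\<theta> (x, t)))"

lemma pair_bwd:
  assumes xy: "x < y" "\<theta> (x, y) = (a, b)" and s: "a < s" "s < b"
  shows "x < jj a s x \<and> jj a s x < y \<and> ii x (jj a s x) a = s \<and>
    ((\<theta> (x, jj a s x) = (a, s) \<and> \<theta> (jj a s x, y) = (s, b)) \<or> (\<theta> (jj a s x, y) = (a, s) \<and> \<theta> (x, jj a s x) = (s, b)))"
proof -
  obtain x' t y' where T: "x' < t" "t < y'" "\<theta> (x', y') = (a, b)"
      "(\<theta> (x', t) = (a, s) \<and> \<theta> (t, y') = (s, b)) \<or> (\<theta> (t, y') = (a, s) \<and> \<theta> (x', t) = (s, b))"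
    using triple_bwd[OF s] by blast
  have "x' = x \<and> y' = y" using theta_inj[of x' y' x y] T(1,2,3) xy by auto
  then have T3: "\<theta> (x, t) = (a, s) \<and> \<theta> (t, y) = (s, b) \<or> \<theta> (t, y) = (a, s) \<and> \<theta> (x, t) = (s, b)"
    and xt: "x < t" and ty: "t < y" using T by auto
  from T3 show ?thesis
  proof
    assume h: "\<theta> (x, t) = (a, s) \<and> \<theta> (t, y) = (s, b)"
    have "tinv \<theta> (a, s) = (x, t)" using tinv_eq[OF xt] h by simp
    then have j: "jj a s x = t" unfolding jj_def by simp
    have "ii x t a = s" unfolding ii_def using h by simp
    then show ?thesis using j h xt ty by simp
  next
    assume h: "\<theta> (t, y) = (a, s) \<and> \<theta> (x, t) = (s, b)"
    have "tinv \<theta> (a, s) = (t, y)" using tinv_eq[OF ty] h by simp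
    then have j: "jj a s x = t" unfolding jj_def using xt by auto
    have "ii x t a = s" unfolding ii_def using h s by auto
    then show ?thesis using j h xt ty by simp
  qed
qed

lemma pair_fwd:
  assumes xy: "x < y" "\<theta> (x, y) = (a, b)" and t: "x < t" "t < y"
  shows "a < ii x t a \<and> ii x t a < b \<and> jj a (ii x t a) x = t"
proof -
  obtain a' s b' where T: "a' < s" "s < b'" "\<theta> (x, y) = (a', b')"
      "(\<theta> (x, t) = (a', s) \<and> \<theta> (t, y) = (s, b')) \<or> (\<theta> (t, y) = (a', s) \<and> \<theta> (x, t) = (s, b'))"
    using triple_fwd[OF t] by blast
  have ab: "a' = a" "b' = b" using T(3) xy(2) by auto
  from T(4) show ?thesis
  proof
    assume h: "\<theta> (x, t) = (a', s) \<and> \<theta> (t, y) = (s, b')"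
    have i: "ii x t a = s" unfolding ii_def using h ab by simp
    have "tinv \<theta> (a, s) = (x, t)" using tinv_eq[OF t(1)] h ab by simp
    then have "jj a s x = t" unfolding jj_def by simp
    then show ?thesis using i T ab by simp
  next
    assume h: "\<theta> (t, y) = (a', s) \<and> \<theta> (x, t) = (s, b')"
    have i: "ii x t a = s" unfolding ii_def using h ab T(1) by auto
    have "tinv \<theta> (a, s) = (t, y)" using tinv_eq[OF t(2)] h ab by simp
    then have "jj a s x = t" unfolding jj_def using t by auto
    then show ?thesis using i T ab by simp
  qed
qed

lemma term_eq:
  assumes xy: "x < y" "\<theta> (x, y) = (a, b)" and s: "a < s" "s < b"
  shows "phi F a s * phi G s b - phi G a s * phi F s b
       = \<sigma> x y * (F x (jj a s x) * G (jj a s x) y - G x (jj a s x) * F (jj a s x) y)"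
proof -
  define t where "t = jj a s x"
  have P: "x < t" "t < y"
    "(\<theta> (x, t) = (a, s) \<and> \<theta> (t, y) = (s, b)) \<or> (\<theta> (t, y) = (a, s) \<and> \<theta> (x, t) = (s, b))"
    using pair_bwd[OF xy s] unfolding t_def by auto
  from P(3) have "phi F a s * phi G s b - phi G a s * phi F s b = \<sigma> x y * (F x t * G t y - G x t * F t y)"
  proof
    assume h: "\<theta> (x, t) = (a, s) \<and> \<theta> (t, y) = (s, b)"
    have e: "\<sigma> x y = \<sigma> x t * \<sigma> t y" using compat_dir[OF P(1,2) xy(2)] h by simp
    have "phi F a s = \<sigma> x t * F x t" "phi G a s = \<sigma> x t * G x t" using phi_pair[OF P(1)] h by simp_all
    moreover have "phi G s b = \<sigma> t y * G t y" "phi F s b = \<sigma> t y * F t y" using phi_pair[OF P(2)] h by simp_all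
    ultimately show ?thesis unfolding e by (simp add: algebra_simps)
  next
    assume h: "\<theta> (t, y) = (a, s) \<and> \<theta> (x, t) = (s, b)"
    have e: "\<sigma> x y = - (\<sigma> x t * \<sigma> t y)" using compat_rev[OF P(1,2) xy(2)] h by simp
    have "phi F a s = \<sigma> t y * F t y" "phi G a s = \<sigma> t y * G t y" using phi_pair[OF P(2)] h by simp_all
    moreover have "phi G s b = \<sigma> x t * G x t" "phi F s b = \<sigma> x t * F x t" using phi_pair[OF P(1)] h by simp_all
    ultimately show ?thesis unfolding e by (simp add: algebra_simps)
  qed
  then show ?thesis unfolding t_def .
qed

lemma middle_sum:
  assumes xy: "x < y" "\<theta> (x, y) = (a, b)"
  shows "(\<Sum>s\<in>{s. a < s \<and> s < b}. phi F a s * phi G s b - phi G a s * phi F s b)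
       = (\<Sum>t\<in>{t. x < t \<and> t < y}. \<sigma> x y * (F x t * G t y - G x t * F t y))"
proof (rule sum.reindex_bij_witness[where j = "\<lambda>s. jj a s x" and i = "\<lambda>t. ii x t a"])
  fix s assume "s \<in> {s. a < s \<and> s < b}"
  then have s: "a < s" "s < b" by auto
  show "ii x (jj a s x) a = s" using pair_bwd[OF xy s] by simp
  show "jj a s x \<in> {t. x < t \<and> t < y}" using pair_bwd[OF xy s] by simp
  show "\<sigma> x y * (F x (jj a s x) * G (jj a s x) y - G x (jj a s x) * F (jj a s x) y)
      = phi F a s * phi G s b - phi G a s * phi F s b"
    using term_eq[OF xy s] by simp
next
  fix t assume "t \<in> {t. x < t \<and> t < y}"
  then have t: "x < t" "t < y" by auto
  show "jj a (ii x t a) x = t" using pair_fwd[OF xy t] by simp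
  show "ii x t a \<in> {s. a < s \<and> s < b}" using pair_fwd[OF xy t] by simp
qed

end


lemma bracket_alg:
  fixes TFa TFb TGa TGb fxx fyy gxx gyy fxy gxy Mf Mg Nfg Ngf s :: "'k::field"
  assumes "TFa = TFb + (fxx - fyy)" "TGa = TGb + (gxx - gyy)" "Nfg = Ngf + s * (Mf - Mg)"
  shows "s * ((fxx * gxy + fxy * gyy + Mf) - (gxx * fxy + gxy * fyy + Mg))
       = (TFa * (s * gxy) + (s * fxy) * TGb + Nfg) - (TGa * (s * fxy) + (s * gxy) * TFb + Ngf)"
  unfolding assms(1) assms(2) assms(3) by algebra

context thsetup3
begin

lemma phi_add: "phi (inc_add f g) = inc_add (phi f) (phi g)"
  unfolding phi_def inc_add_def by (intro ext) (simp add: distrib_left distrib_right sum.distrib)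

lemma phi_smult: "phi (inc_smult c f) = inc_smult c (phi f)"
  unfolding phi_def inc_smult_def by (intro ext) (simp add: sum_distrib_left mult.assoc mult.left_commute)

lemma phi_alg: "phi f \<in> inc_alg"
  unfolding inc_alg_def using phi_nle by blast

lemma tinv_obtain:
  assumes "a < b"
  obtains x y where "x < y" "\<theta> (x, y) = (a, b)" "tinv \<theta> (a, b) = (x, y)"
  using tinv_props[OF assms] by (metis prod.collapse)

lemma phi_inj:
  assumes f: "f \<in> inc_alg" and g: "g \<in> inc_alg" and eq: "phi f = phi g"
  shows "f = g"
proof (intro ext)
  fix x y
  show "f x y = g x y"
  proof (cases "x < y")
    case True
    obtain a b where ab: "\<theta> (x, y) = (a, b)" by fastforce
    have "phi f a b = \<sigma> x y * f x y" "phi g a b = \<sigma> x y * g x y" using phi_pair[OF True ab] by auto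
    then have "\<sigma> x y * f x y = \<sigma> x y * g x y" using eq by metis
    moreover have "\<sigma> x y \<noteq> 0" using sigma_units True by blast
    ultimately show ?thesis by auto
  next
    case False
    show ?thesis
    proof (cases "x = y")
      case True
      have "\<forall>a. (\<Sum>z\<in>UNIV. (f z z - g z z) * Dp z a) = 0"
      proof
        fix a
        have "(\<Sum>z\<in>UNIV. (f z z - g z z) * Dp z a) = phi f a a - phi g a a"
          unfolding phi_diag by (simp add: sum_subtractf left_diff_distrib)
        then show "(\<Sum>z\<in>UNIV. (f z z - g z z) * Dp z a) = 0" using eq by simp
      qed
      then have "f y y - g y y = 0" by (rule T_inj)
      then show ?thesis using True by simp
    next
      case False2: False
      then have "\<not> x \<le> y" using False by (simp add: order_le_less)
      then show ?thesis using f g unfolding inc_alg_def by simp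
    qed
  qed
qed

lemma phi_surj:
  assumes g: "g \<in> inc_alg"
  shows "\<exists>f\<in>inc_alg. phi f = g"
proof -
  obtain lam where lam: "\<forall>a. (\<Sum>z\<in>UNIV. lam z * Dp z a) = g a a" using T_surj[of "\<lambda>a. g a a"] by blast
  define f where "f a b = (if a < b then g (fst (\<theta> (a, b))) (snd (\<theta> (a, b))) / \<sigma> a b else if a = b then lam a else 0)" for a b
  have fa: "f \<in> inc_alg" unfolding inc_alg_def f_def by (auto simp: order_le_less)
  have "phi f = g"
  proof (intro ext)
    fix a b
    show "phi f a b = g a b"
    proof (cases "a < b")
      case True
      obtain x y where xy: "x < y" "\<theta> (x, y) = (a, b)" "tinv \<theta> (a, b) = (x, y)"
        using tinv_obtain[OF True] by blast
      have "phi f a b = \<sigma> x y * f x y" by (rule phi_pair[OF xy(1,2)])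
      also have "\<dots> = g a b" unfolding f_def using xy sigma_units by simp
      finally show ?thesis .
    next
      case False
      show ?thesis
      proof (cases "a = b")
        case True
        have "phi f a a = (\<Sum>z\<in>UNIV. lam z * Dp z a)" unfolding phi_diag f_def by simp
        then show ?thesis using lam True by simp
      next
        case False2: False
        then have "\<not> a \<le> b" using False by (simp add: order_le_less)
        then show ?thesis using g phi_nle unfolding inc_alg_def by simp
      qed
    qed
  qed
  then show ?thesis using fa by blast
qed

lemma phi_bij: "bij_betw phi inc_alg inc_alg"
  unfolding bij_betw_def
proof
  show "inj_on phi inc_alg" using phi_inj by (meson inj_onI)
  show "phi ` inc_alg = inc_alg"
  proof
    show "phi ` inc_alg \<subseteq> inc_alg" using phi_alg by blast
    show "inc_alg \<subseteq> phi ` inc_alg" using phi_surj by blast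
  qed
qed

lemma phi_bracket: "phi (lie_bracket f g) = lie_bracket (phi f) (phi g)"
proof (intro ext)
  fix a b
  show "phi (lie_bracket f g) a b = lie_bracket (phi f) (phi g) a b"
  proof (cases "a < b")
    case True
    obtain x y where xy: "x < y" "\<theta> (x, y) = (a, b)" "tinv \<theta> (a, b) = (x, y)"
      using tinv_obtain[OF True] by blast
    let ?s = "\<sigma> x y"
    let ?Mf = "\<Sum>t\<in>{t. x < t \<and> t < y}. f x t * g t y"
    let ?Mg = "\<Sum>t\<in>{t. x < t \<and> t < y}. g x t * f t y"
    let ?Nfg = "\<Sum>t\<in>{t. a < t \<and> t < b}. phi f a t * phi g t b"
    let ?Ngf = "\<Sum>t\<in>{t. a < t \<and> t < b}. phi g a t * phi f t b"
    let ?TF = "\<lambda>c. \<Sum>z\<in>UNIV. f z z * Dp z c"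
    let ?TG = "\<lambda>c. \<Sum>z\<in>UNIV. g z z * Dp z c"
    have L: "phi (lie_bracket f g) a b = ?s * ((f x x * g x y + f x y * g y y + ?Mf) - (g x x * f x y + g x y * f y y + ?Mg))"
      unfolding phi_pair[OF xy(1,2)] lie_bracket_def inc_mult_split[OF xy(1)] ..
    have pab: "phi f a b = ?s * f x y" "phi g a b = ?s * g x y" using phi_pair[OF xy(1,2)] by auto
    have R: "lie_bracket (phi f) (phi g) a b =
        (?TF a * (?s * g x y) + (?s * f x y) * ?TG b + ?Nfg) - (?TG a * (?s * f x y) + (?s * g x y) * ?TF b + ?Ngf)"
      unfolding lie_bracket_def inc_mult_split[OF True] pab phi_diag ..
    have ab: "fst (\<theta> (x, y)) = a" "snd (\<theta> (x, y)) = b" using xy(2) by auto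
    have D1: "?TF a - ?TF b = f x x - f y y" using Dp_diff[OF xy(1), of "\<lambda>z. f z z"] ab by simp
    have D2: "?TG a - ?TG b = g x x - g y y" using Dp_diff[OF xy(1), of "\<lambda>z. g z z"] ab by simp
    have N: "?Nfg - ?Ngf = ?s * (?Mf - ?Mg)"
    proof -
      have "?Nfg - ?Ngf = (\<Sum>t\<in>{t. a < t \<and> t < b}. phi f a t * phi g t b - phi g a t * phi f t b)"
        by (simp add: sum_subtractf)
      also have "\<dots> = (\<Sum>t\<in>{t. x < t \<and> t < y}. ?s * (f x t * g t y - g x t * f t y))"
        by (rule middle_sum[OF xy(1,2)])
      also have "\<dots> = ?s * (?Mf - ?Mg)" by (simp add: sum_distrib_left sum_subtractf right_diff_distrib)
      finally show ?thesis .
    qed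
    show ?thesis unfolding L R
      by (rule bracket_alg) (use D1 D2 N in \<open>simp_all add: algebra_simps\<close>)
  next
    case False
    show ?thesis
    proof (cases "a = b")
      case True
      have "lie_bracket f g z z = 0" for z unfolding lie_bracket_def inc_mult_diag by simp
      then have "phi (lie_bracket f g) a b = 0" using True by (simp add: phi_diag)
      moreover have "lie_bracket (phi f) (phi g) a b = 0" using True by (simp add: lie_bracket_def inc_mult_diag)
      ultimately show ?thesis by simp
    next
      case False2: False
      then have nle: "\<not> a \<le> b" using False by (simp add: order_le_less)
      show ?thesis unfolding lie_bracket_def inc_mult_nle[OF nle] phi_nle[OF nle] by simp
    qed
  qed
qed

lemma phi_L:
  assumes f: "f \<in> L_space i"
  shows "phi f \<in> L_space i"
  unfolding L_space_def
proof (intro CollectI allI impI)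
  fix a b assume nz: "phi f a b \<noteq> 0"
  show "a \<le> b \<and> chain_len a b = i"
  proof (cases "a < b")
    case True
    obtain x y where xy: "x < y" "\<theta> (x, y) = (a, b)" "tinv \<theta> (a, b) = (x, y)"
      using tinv_obtain[OF True] by blast
    have "f x y \<noteq> 0" using nz phi_pair[OF xy(1,2)] by auto
    then have "chain_len x y = i" using f unfolding L_space_def by blast
    moreover have "chain_len a b = chain_len x y" using chain_len_theta[OF xy(1)] xy(2) by simp
    ultimately show ?thesis using True by simp
  next
    case False
    show ?thesis
    proof (cases "a = b")
      case True
      have "(\<Sum>z\<in>UNIV. f z z * Dp z a) \<noteq> 0" using nz True phi_diag by simp
      then obtain z where "f z z * Dp z a \<noteq> 0" by (meson sum.neutral)
      then have "f z z \<noteq> 0" by auto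
      then have "chain_len z z = i" using f unfolding L_space_def by blast
      then show ?thesis using True chain_len_refl[of a] chain_len_refl[of z] by simp
    next
      case False2: False
      then have "\<not> a \<le> b" using False by (simp add: order_le_less)
      then show ?thesis using nz phi_nle by blast
    qed
  qed
qed

lemma phi_e:
  assumes xy: "x < y"
  shows "phi (inc_e x y) = inc_smult (\<sigma> x y) (inc_e (fst (\<theta> (x, y))) (snd (\<theta> (x, y))))"
proof (intro ext)
  fix a b
  have st: "fst (\<theta> (x, y)) < snd (\<theta> (x, y))" using strict_img[OF xy] .
  show "phi (inc_e x y) a b = inc_smult (\<sigma> x y) (inc_e (fst (\<theta> (x, y))) (snd (\<theta> (x, y)))) a b"
  proof (cases "a < b")
    case True
    obtain x' y' where xy': "x' < y'" "\<theta> (x', y') = (a, b)" "tinv \<theta> (a, b) = (x', y')"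
      using tinv_obtain[OF True] by blast
    show ?thesis
    proof (cases "x' = x \<and> y' = y")
      case True
      then show ?thesis using phi_pair[OF xy'(1,2)] xy'(2) unfolding inc_smult_def inc_e_def by auto
    next
      case False
      then have "\<theta> (x, y) \<noteq> (a, b)" using theta_inj[OF xy xy'(1)] xy'(2) by auto
      then show ?thesis using phi_pair[OF xy'(1,2)] False unfolding inc_smult_def inc_e_def
        by (auto simp: prod_eq_iff)
    qed
  next
    case False
    then have "\<not> (a = fst (\<theta> (x, y)) \<and> b = snd (\<theta> (x, y)))" using st by auto
    moreover have "phi (inc_e x y) a b = 0"
    proof (cases "a = b")
      case True
      have "(inc_e x y z z :: 'k) = 0" for z unfolding inc_e_def using xy by auto
      then show ?thesis using True phi_diag by simp
    next
      case False2: False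
      then have "\<not> a \<le> b" using False by (simp add: order_le_less)
      then show ?thesis using phi_nle by blast
    qed
    ultimately show ?thesis unfolding inc_smult_def inc_e_def by auto
  qed
qed

lemma phi_lie_aut: "lie_automorphism phi"
  unfolding lie_automorphism_def using phi_bij phi_add phi_smult phi_bracket by blast

lemma phi_elementary: "elementary phi"
  unfolding elementary_def using phi_lie_aut phi_L by blast

lemma main_exists:
  "\<exists>\<phi>. elementary \<phi> \<and>
     (\<forall>x y. x < y \<longrightarrow> \<phi> (inc_e x y) = inc_smult (\<sigma> x y) (inc_e (fst (\<theta> (x, y))) (snd (\<theta> (x, y)))))"
  using phi_elementary phi_e by blast

end


theorem lemma5p16:
  fixes \<theta> :: "'a::{order,finite} \<times> 'a \<Rightarrow> 'a \<times> 'a"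
    and \<sigma> :: "'a \<Rightarrow> 'a \<Rightarrow> 'k::field"
  assumes conn: "poset_connected TYPE('a)"
    and bij: "bij_betw \<theta> strict_pairs strict_pairs"
    and adm: "admissible \<theta>"
    and mono: "monotone_on_max_chains \<theta>"
    and sigma_units: "\<forall>x y. x < y \<longrightarrow> \<sigma> x y \<noteq> 0"
    and compat: "compatible \<sigma> \<theta>"
  shows "\<exists>\<phi>. elementary \<phi> \<and>
           (\<forall>x y. x < y \<longrightarrow>
              \<phi> (inc_e x y) = inc_smult (\<sigma> x y) (inc_e (fst (\<theta> (x, y))) (snd (\<theta> (x, y)))))"
proof -
  have L: "thsetup3 \<theta> \<sigma>"
    unfolding thsetup3_def thsetup2_def thsetup_def thsetup2_axioms_def thsetup3_axioms_def
    using assms by blast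
  show ?thesis by (rule thsetup3.main_exists[OF L])
qed

end
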